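(* Let $m$ be an odd positive integer and $q\geq 1$. Then $m\#Q_q$ divides $Q_{m+q}$.
   Context: $Q_q$ denotes the $q$-dimensional hypercube graph (vertices are $q$-tuples of $0$'s and $1$'s, adjacent iff they differ in exactly one coordinate). For a graph $G$ and $m\geq 1$, $m\#G$ is the graph obtained by taking two disjoint copies $G'$ and $G''$ of $G$ and joining each vertex $v'\in V(G')$ to the corresponding vertex $v''\in V(G'')$ by a path with $m$ edges, these new paths being internally vertex-disjoint from each other and from $G'\cup G''$. For graphs $H$ and $G$, "$H$ divides $G$" means there is a collection of subgraphs $H_i$ of $G$, each isomorphic to $H$, such that $E(G)$ is the disjoint union of the edge sets $E(H_i)$. *)

theory Defs
  imports Main
begin

text \<open>A (simple, undirected) graph is a pair (vertex set, edge set), edges being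
  2-element vertex sets.\<close>
type_synonym 'a graph = "'a set \<times> 'a set set"

definition verts :: "'a graph \<Rightarrow> 'a set" where "verts G = fst G"
definition edges :: "'a graph \<Rightarrow> 'a set set" where "edges G = snd G"

definition hypercube :: "nat \<Rightarrow> bool list graph" where
  "hypercube q =
     ({xs. length xs = q},
      {{xs, ys} | xs ys. length xs = q \<and> length ys = q \<and>
                         card {i. i < q \<and> xs ! i \<noteq> ys ! i} = 1})"

text \<open>m # G: vertex (v,0) is v' in G', vertex (v,m) is v'' in G'', vertices (v,i)
  with 0<i<m are the internal vertices of the path of length m from v' to v''.\<close>
definition mhash :: "nat \<Rightarrow> 'a graph \<Rightarrow> ('a \<times> nat) graph" where
  "mhash m G =
     (verts G \<times> {0..m},
      {{(u, 0), (v, 0)} | u v. {u, v} \<in> edges G} \<union>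
      {{(u, m), (v, m)} | u v. {u, v} \<in> edges G} \<union>
      {{(v, i), (v, Suc i)} | v i. v \<in> verts G \<and> i < m})"

definition subgraph :: "'a graph \<Rightarrow> 'a graph \<Rightarrow> bool" where
  "subgraph H G \<longleftrightarrow> verts H \<subseteq> verts G \<and> edges H \<subseteq> edges G \<and>
                      (\<forall>e\<in>edges H. e \<subseteq> verts H)"

definition graph_iso :: "'b graph \<Rightarrow> 'a graph \<Rightarrow> bool" where
  "graph_iso H G \<longleftrightarrow> (\<exists>f. bij_betw f (verts H) (verts G) \<and> (`) f ` edges H = edges G)"

definition divides :: "'b graph \<Rightarrow> 'a graph \<Rightarrow> bool" where
  "divides H G \<longleftrightarrow> (\<exists>S :: 'a graph set.
      (\<forall>K\<in>S. subgraph K G \<and> graph_iso H K) \<and>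
      (\<Union>K\<in>S. edges K) = edges G \<and>
      (\<forall>K1\<in>S. \<forall>K2\<in>S. K1 \<noteq> K2 \<longrightarrow> edges K1 \<inter> edges K2 = {}))"

end

theory Submission
  imports Defs
begin

definition adj :: "nat \<Rightarrow> bool list \<Rightarrow> bool list \<Rightarrow> bool" where
  "adj n xs ys \<longleftrightarrow> length xs = n \<and> length ys = n \<and> card {i. i < n \<and> xs ! i \<noteq> ys ! i} = 1"

lemma adj_sym: "adj n x y = adj n y x"
proof -
  have "{i. i < n \<and> x ! i \<noteq> y ! i} = {i. i < n \<and> y ! i \<noteq> x ! i}" by auto
  then show ?thesis unfolding adj_def by auto
qed

lemma edges_hc: "e \<in> edges (hypercube n) \<longleftrightarrow> (\<exists>x y. e = {x,y} \<and> adj n x y)"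
  by (auto simp: edges_def hypercube_def adj_def)

lemma verts_hc: "verts (hypercube n) = {xs. length xs = n}"
  by (simp add: verts_def hypercube_def)

lemma edge_pair: "{u,v} \<in> edges (hypercube n) \<longleftrightarrow> adj n u v"
  unfolding edges_hc by (auto simp: doubleton_eq_iff adj_sym)

lemma card_diff_zero:
  assumes "length a = n" "length b = n"
  shows "card {i. i < n \<and> a ! i \<noteq> b ! i} = 0 \<longleftrightarrow> a = b"
proof -
  have "card {i. i < n \<and> a ! i \<noteq> b ! i} = 0 \<longleftrightarrow> {i. i < n \<and> a ! i \<noteq> b ! i} = {}"
    by simp
  also have "\<dots> \<longleftrightarrow> a = b" using assms by (auto simp: list_eq_iff_nth_eq)
  finally show ?thesis .
qed

lemma adj_neq: "adj n x y \<Longrightarrow> x \<noteq> y"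
  unfolding adj_def by auto

lemma img_shift: "((x::nat) \<in> (\<lambda>i. i + m) ` B) \<longleftrightarrow> (m \<le> x \<and> x - m \<in> B)"
proof
  assume "x \<in> (\<lambda>i. i + m) ` B"
  then obtain i where "i \<in> B" "x = i + m" by blast
  then show "m \<le> x \<and> x - m \<in> B" by simp
next
  assume h: "m \<le> x \<and> x - m \<in> B"
  then have "x = (x - m) + m" by simp
  then show "x \<in> (\<lambda>i. i + m) ` B" using h rev_image_eqI[of "x - m" B x "\<lambda>i. i + m"] by blast
qed

lemma diff_append:
  assumes "length a = m" "length a' = m" "length u = q" "length v = q"
  shows "{i. i < m + q \<and> (a @ u) ! i \<noteq> (a' @ v) ! i} =
         {i. i < m \<and> a ! i \<noteq> a' ! i} \<union> (\<lambda>i. i + m) ` {i. i < q \<and> u ! i \<noteq> v ! i}"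
proof (rule set_eqI)
  fix x
  show "x \<in> {i. i < m + q \<and> (a @ u) ! i \<noteq> (a' @ v) ! i} \<longleftrightarrow>
        x \<in> {i. i < m \<and> a ! i \<noteq> a' ! i} \<union> (\<lambda>i. i + m) ` {i. i < q \<and> u ! i \<noteq> v ! i}"
  proof (cases "x < m")
    case True
    then have "(a @ u) ! x = a ! x" "(a' @ v) ! x = a' ! x" using assms by (simp_all add: nth_append)
    then show ?thesis using True by (simp add: img_shift)
  next
    case False
    then have "(a @ u) ! x = u ! (x - m)" "(a' @ v) ! x = v ! (x - m)" using assms by (simp_all add: nth_append)
    moreover have "x < m + q \<longleftrightarrow> x - m < q" using False by arith
    ultimately show ?thesis using False by (simp add: img_shift)
  qed
qed

lemma adj_append:
  assumes "length a = m" "length a' = m" "length u = q" "length v = q"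
  shows "adj (m + q) (a @ u) (a' @ v) \<longleftrightarrow> (a = a' \<and> adj q u v) \<or> (u = v \<and> adj m a a')"
proof -
  let ?A = "{i. i < m \<and> a ! i \<noteq> a' ! i}"
  let ?B = "{i. i < q \<and> u ! i \<noteq> v ! i}"
  have fin: "finite ?A" "finite ((\<lambda>i. i + m) ` ?B)" by auto
  have dis: "?A \<inter> (\<lambda>i. i + m) ` ?B = {}" by auto
  have cB: "card ((\<lambda>i. i + m) ` ?B) = card ?B" by (rule card_image) (auto simp: inj_on_def)
  have c: "card {i. i < m + q \<and> (a @ u) ! i \<noteq> (a' @ v) ! i} = card ?A + card ?B"
    using diff_append[OF assms] card_Un_disjoint[OF fin dis] cB by simp
  have z1: "card ?A = 0 \<longleftrightarrow> a = a'" by (rule card_diff_zero[OF assms(1,2)])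
  have z2: "card ?B = 0 \<longleftrightarrow> u = v" by (rule card_diff_zero[OF assms(3,4)])
  have s: "card ?A + card ?B = 1 \<longleftrightarrow> (card ?A = 0 \<and> card ?B = 1) \<or> (card ?A = 1 \<and> card ?B = 0)" by arith
  have "adj (m + q) (a @ u) (a' @ v) \<longleftrightarrow> card ?A + card ?B = 1" unfolding adj_def using assms c by simp
  also have "\<dots> \<longleftrightarrow> (a = a' \<and> card ?B = 1) \<or> (u = v \<and> card ?A = 1)" using s z1 z2 by blast
  also have "\<dots> \<longleftrightarrow> (a = a' \<and> adj q u v) \<or> (u = v \<and> adj m a a')" unfolding adj_def using assms by simp
  finally show ?thesis .
qed

fun nx :: "bool \<times> bool \<Rightarrow> bool \<times> bool" where "nx (a, b) = (b, \<not> a)"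
fun lst :: "bool \<times> bool \<Rightarrow> bool list" where "lst (a, b) = [a, b]"

lemma len_lst[simp]: "length (lst c) = 2" by (cases c) auto
lemma lst_inj[simp]: "lst c = lst d \<longleftrightarrow> c = d" by (cases c; cases d) auto
lemma nx_neq[simp]: "nx c \<noteq> c" by (cases c) auto
lemma nx_nx_neq[simp]: "nx (nx c) \<noteq> c" by (cases c) auto
lemma nx_neq2[simp]: "c \<noteq> nx c" by (cases c) auto
lemma nx_nx_neq2[simp]: "c \<noteq> nx (nx c)" by (cases c) auto
lemma nx_inj[simp]: "nx c = nx d \<longleftrightarrow> c = d" by (cases c; cases d) auto
lemma nx_surj: "\<exists>c. d = nx c" by (cases d) (auto intro: exI[of _ "(\<not> snd d, fst d)"])

lemma len2: "length z = 2 \<Longrightarrow> \<exists>c. z = lst c"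
  by (cases z rule: list.exhaust; cases "tl z" rule: list.exhaust) (auto intro: exI[of _ "(z!0, z!1)"])

lemma adj2: "adj 2 (lst c) (lst d) \<longleftrightarrow> d = nx c \<or> c = nx d"
proof -
  obtain a b where c: "c = (a,b)" by (cases c)
  obtain a' b' where d: "d = (a',b')" by (cases d)
  have e: "{i. i < 2 \<and> [a,b] ! i \<noteq> [a',b'] ! i} = {i. (i = 0 \<and> a \<noteq> a') \<or> (i = 1 \<and> b \<noteq> b')}"
    by (auto simp: numeral_2_eq_2 less_Suc_eq)
  have e2: "{i::nat. (i = 0 \<and> a \<noteq> a') \<or> (i = 1 \<and> b \<noteq> b')} =
      (if a \<noteq> a' then {0} else {}) \<union> (if b \<noteq> b' then {1} else {})" by auto
  have "adj 2 (lst c) (lst d) \<longleftrightarrow> card ((if a \<noteq> a' then {0::nat} else {}) \<union> (if b \<noteq> b' then {1} else {})) = 1"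
    unfolding adj_def c d using e e2 by simp
  then show ?thesis unfolding c d by (cases a; cases b; cases a'; cases b') simp_all
qed

definition PSys :: "nat \<Rightarrow> (nat \<Rightarrow> bool list) set \<Rightarrow> bool" where
 "PSys n PS \<longleftrightarrow>
   (\<forall>p\<in>PS. \<forall>i\<le>n. length (p i) = n) \<and>
   (\<forall>p\<in>PS. inj_on p {0..n}) \<and>
   (\<forall>p\<in>PS. \<forall>i<n. adj n (p i) (p (Suc i))) \<and>
   (\<forall>x y. adj n x y \<longrightarrow> (\<exists>p\<in>PS. \<exists>i<n. {x,y} = {p i, p (Suc i)})) \<and>
   (\<forall>p\<in>PS. \<forall>p'\<in>PS. \<forall>i<n. \<forall>i'<n. {p i, p (Suc i)} = {p' i', p' (Suc i')} \<longrightarrow> p = p') \<and>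
   (\<forall>x. length x = n \<longrightarrow> (\<exists>p\<in>PS. x = p 0 \<or> x = p n)) \<and>
   (\<forall>p\<in>PS. \<forall>p'\<in>PS. \<forall>x. (x = p 0 \<or> x = p n) \<longrightarrow> (x = p' 0 \<or> x = p' n) \<longrightarrow> p = p')"

lemma PSysD:
  assumes "PSys n PS"
  shows PSys_L: "\<forall>p\<in>PS. \<forall>i\<le>n. length (p i) = n"
    and PSys_I: "\<forall>p\<in>PS. inj_on p {0..n}"
    and PSys_A: "\<forall>p\<in>PS. \<forall>i<n. adj n (p i) (p (Suc i))"
    and PSys_C: "\<forall>x y. adj n x y \<longrightarrow> (\<exists>p\<in>PS. \<exists>i<n. {x,y} = {p i, p (Suc i)})"
    and PSys_U: "\<forall>p\<in>PS. \<forall>p'\<in>PS. \<forall>i<n. \<forall>i'<n. {p i, p (Suc i)} = {p' i', p' (Suc i')} \<longrightarrow> p = p'"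
    and PSys_E: "\<forall>x. length x = n \<longrightarrow> (\<exists>p\<in>PS. x = p 0 \<or> x = p n)"
    and PSys_EU: "\<forall>p\<in>PS. \<forall>p'\<in>PS. \<forall>x. (x = p 0 \<or> x = p n) \<longrightarrow> (x = p' 0 \<or> x = p' n) \<longrightarrow> p = p'"
  using assms unfolding PSys_def apply -
  apply (elim conjE, assumption)+
  done

lemma len1: "length x = Suc 0 \<Longrightarrow> x = [False] \<or> x = [True]"
  by (cases x) auto

lemma adj1: "adj (Suc 0) x y \<longleftrightarrow> length x = 1 \<and> length y = 1 \<and> x \<noteq> y"
proof
  assume "adj (Suc 0) x y" then show "length x = 1 \<and> length y = 1 \<and> x \<noteq> y"
    using adj_neq unfolding adj_def by auto
next
  assume a: "length x = 1 \<and> length y = 1 \<and> x \<noteq> y"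
  then have "{i. i < Suc 0 \<and> x ! i \<noteq> y ! i} = {0}"
    using len1[of x] len1[of y] by auto
  then show "adj (Suc 0) x y" using a unfolding adj_def by simp
qed

lemma PSys_base: "PSys (Suc 0) {\<lambda>i. if i = 0 then [False] else [True]}"
  unfolding PSys_def
  apply (intro conjI)
  apply (auto simp: adj1 inj_on_def)
  apply (metis len1 insert_commute)+
  done

lemma app_eq: "length x = length y \<Longrightarrow> (x @ u = y @ v) \<longleftrightarrow> x = y \<and> u = v"
  by simp

definition ext :: "nat \<Rightarrow> (nat \<Rightarrow> bool list) \<Rightarrow> bool \<times> bool \<Rightarrow> nat \<Rightarrow> bool list" where
  "ext n p c i = (if i = 0 then p 0 @ lst (nx c) else if i \<le> Suc n then p (i - 1) @ lst c else p n @ lst (nx c))"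

lemma ext0[simp]: "ext n p c 0 = p 0 @ lst (nx c)" by (simp add: ext_def)
lemma extS[simp]: "i \<le> n \<Longrightarrow> ext n p c (Suc i) = p i @ lst c" by (simp add: ext_def)
lemma extL[simp]: "ext n p c (Suc (Suc n)) = p n @ lst (nx c)" by (simp add: ext_def)

lemma idx_cases: "i \<le> Suc (Suc n) \<Longrightarrow> i = 0 \<or> (\<exists>j. i = Suc j \<and> j \<le> n) \<or> i = Suc (Suc n)"
  by (cases i) auto

lemma step_cases: "i < Suc (Suc n) \<Longrightarrow> i = 0 \<or> (\<exists>j. i = Suc j \<and> j < n) \<or> i = Suc n"
  by (cases i) auto

lemma adj_app2:
  assumes "length a = n" "length a' = n"
  shows "adj (Suc (Suc n)) (a @ lst c) (a' @ lst d) \<longleftrightarrow> (a = a' \<and> (d = nx c \<or> c = nx d)) \<or> (c = d \<and> adj n a a')"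
  using adj_append[OF assms len_lst len_lst, of c d] adj2[of c d] by simp

lemma dbl: "{a, b} = {c, d} \<longleftrightarrow> (a = c \<and> b = d) \<or> (a = d \<and> b = c)"
  by (rule doubleton_eq_iff)

lemma split_len: "length z = Suc (Suc n) \<Longrightarrow> \<exists>x c. length x = n \<and> z = x @ lst c"
proof -
  assume z: "length z = Suc (Suc n)"
  then have "length (drop n z) = 2" by simp
  then obtain c where "drop n z = lst c" using len2 by blast
  then have "z = take n z @ lst c" by (metis append_take_drop_id)
  then show ?thesis using z by (intro exI[of _ "take n z"] exI[of _ c]) simp
qed

lemma dbl_app:
  assumes "length a = k" "length b = k" "length a' = k" "length b' = k"
  shows "{a @ s, b @ t} = {a' @ s', b' @ t'} \<longleftrightarrow>
    (a = a' \<and> s = s' \<and> b = b' \<and> t = t') \<or> (a = b' \<and> s = t' \<and> b = a' \<and> t = s')"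
  using assms by (simp add: dbl)

lemma step_val:
  assumes "i < Suc (Suc n)"
  shows "(i = 0 \<and> ext n p c i = p 0 @ lst (nx c) \<and> ext n p c (Suc i) = p 0 @ lst c) \<or>
         (\<exists>j. j < n \<and> i = Suc j \<and> ext n p c i = p j @ lst c \<and> ext n p c (Suc i) = p (Suc j) @ lst c) \<or>
         (i = Suc n \<and> ext n p c i = p n @ lst c \<and> ext n p c (Suc i) = p n @ lst (nx c))"
  using step_cases[OF assms] by auto

lemma PSys_step:
  assumes P: "PSys n PS" and npos: "0 < n"
  shows "PSys (Suc (Suc n)) {ext n p c | p c. p \<in> PS}"
proof -
  have L: "\<And>p i. p \<in> PS \<Longrightarrow> i \<le> n \<Longrightarrow> length (p i) = n"
    using PSys_L[OF P] by blast
  have I: "\<And>p. p \<in> PS \<Longrightarrow> inj_on p {0..n}"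
    using PSys_I[OF P] by blast
  have A: "\<And>p i. p \<in> PS \<Longrightarrow> i < n \<Longrightarrow> adj n (p i) (p (Suc i))"
    using PSys_A[OF P] by blast
  have C: "\<And>x y. adj n x y \<Longrightarrow> \<exists>p\<in>PS. \<exists>i<n. {x,y} = {p i, p (Suc i)}"
    using PSys_C[OF P] by blast
  have U: "\<And>p p' i i'. p \<in> PS \<Longrightarrow> p' \<in> PS \<Longrightarrow> i < n \<Longrightarrow> i' < n \<Longrightarrow>
       {p i, p (Suc i)} = {p' i', p' (Suc i')} \<Longrightarrow> p = p'"
    using PSys_U[OF P] by blast
  have E: "\<And>x. length x = n \<Longrightarrow> \<exists>p\<in>PS. x = p 0 \<or> x = p n"
    using PSys_E[OF P] by blast
  have EU: "\<And>p p' x. p \<in> PS \<Longrightarrow> p' \<in> PS \<Longrightarrow> (x = p 0 \<or> x = p n) \<Longrightarrow> (x = p' 0 \<or> x = p' n) \<Longrightarrow> p = p'"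
    using PSys_EU[OF P] by blast
  have L0: "\<And>p. p \<in> PS \<Longrightarrow> length (p 0) = n" using L by simp
  have Ln: "\<And>p. p \<in> PS \<Longrightarrow> length (p n) = n" using L by simp
  have LS: "\<And>p j. p \<in> PS \<Longrightarrow> j < n \<Longrightarrow> length (p (Suc j)) = n" using L by simp
  have Lj: "\<And>p j. p \<in> PS \<Longrightarrow> j < n \<Longrightarrow> length (p j) = n" using L by simp
  have lenE: "length (ext n p c i) = Suc (Suc n)" if "p \<in> PS" "i \<le> Suc (Suc n)" for p c i
    using idx_cases[OF that(2)] L[OF that(1)] by auto
  have injE: "inj_on (ext n p c) {0..Suc (Suc n)}" if p: "p \<in> PS" for p c
  proof (rule inj_onI)
    fix i j assume i: "i \<in> {0..Suc (Suc n)}" and j: "j \<in> {0..Suc (Suc n)}" and eq: "ext n p c i = ext n p c j"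
    have ip: "\<And>a b. a \<le> n \<Longrightarrow> b \<le> n \<Longrightarrow> p a = p b \<Longrightarrow> a = b" using I[OF p] unfolding inj_on_def by auto
    have n0: "p 0 \<noteq> p n \<or> n = 0" using ip[of 0 n] by auto
    have i': "i \<le> Suc (Suc n)" and j': "j \<le> Suc (Suc n)" using i j by auto
    from idx_cases[OF i'] idx_cases[OF j'] show "i = j"
    proof (elim disjE exE conjE)
      fix b assume "i = 0" "j = Suc b" "b \<le> n"
      then have "lst (nx c) = lst c" using eq L[OF p, of 0] L[OF p, of b] by simp
      then show ?thesis by simp
    next
      assume "i = 0" "j = Suc (Suc n)"
      then have "p 0 = p n" using eq L[OF p, of 0] L[OF p, of n] by simp
      then show ?thesis using n0 npos by simp
    next
      fix a assume "i = Suc a" "a \<le> n" "j = 0"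
      then have "lst (nx c) = lst c" using eq L[OF p, of 0] L[OF p, of a] by simp
      then show ?thesis by simp
    next
      fix a b assume "i = Suc a" "a \<le> n" "j = Suc b" "b \<le> n"
      then have "p a = p b" using eq L[OF p, of a] L[OF p, of b] by simp
      then show ?thesis using ip \<open>a \<le> n\<close> \<open>b \<le> n\<close> \<open>i = Suc a\<close> \<open>j = Suc b\<close> by simp
    next
      fix a assume "i = Suc a" "a \<le> n" "j = Suc (Suc n)"
      then have "lst (nx c) = lst c" using eq L[OF p, of n] L[OF p, of a] by simp
      then show ?thesis by simp
    next
      assume "i = Suc (Suc n)" "j = 0"
      then have "p 0 = p n" using eq L[OF p, of 0] L[OF p, of n] by simp
      then show ?thesis using n0 npos by simp
    next
      fix b assume "i = Suc (Suc n)" "j = Suc b" "b \<le> n"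
      then have "lst (nx c) = lst c" using eq L[OF p, of n] L[OF p, of b] by simp
      then show ?thesis by simp
    qed simp_all
  qed
  have mem: "\<And>p c. p \<in> PS \<Longrightarrow> ext n p c \<in> {ext n p c |p c. p \<in> PS}" by blast
  show ?thesis
    unfolding PSys_def
  proof (intro conjI)
    show "\<forall>P\<in>{ext n p c |p c. p \<in> PS}. \<forall>i\<le>Suc (Suc n). length (P i) = Suc (Suc n)"
      using lenE by blast
    show "\<forall>P\<in>{ext n p c |p c. p \<in> PS}. inj_on P {0..Suc (Suc n)}"
      using injE by blast
    show "\<forall>P\<in>{ext n p c |p c. p \<in> PS}. \<forall>i<Suc (Suc n). adj (Suc (Suc n)) (P i) (P (Suc i))"
    proof (intro ballI allI impI)
      fix P i assume "P \<in> {ext n p c |p c. p \<in> PS}" and i: "i < Suc (Suc n)"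
      then obtain p c where P: "P = ext n p c" and p: "p \<in> PS" by blast
      from step_cases[OF i] show "adj (Suc (Suc n)) (P i) (P (Suc i))"
      proof (elim disjE exE conjE)
        assume "i = 0" then show ?thesis using P adj_app2[OF L0[OF p] L0[OF p], of "nx c" c] by simp
      next
        fix j assume "i = Suc j" "j < n" then show ?thesis
          using P adj_app2[OF Lj[OF p \<open>j < n\<close>] LS[OF p \<open>j < n\<close>], of c c] A[OF p] by simp
      next
        assume "i = Suc n" then show ?thesis using P adj_app2[OF Ln[OF p] Ln[OF p], of c "nx c"] by simp
      qed
    qed
    show "\<forall>x y. adj (Suc (Suc n)) x y \<longrightarrow> (\<exists>P\<in>{ext n p c |p c. p \<in> PS}. \<exists>i<Suc (Suc n). {x, y} = {P i, P (Suc i)})"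
    proof (intro allI impI)
      fix z w assume zw: "adj (Suc (Suc n)) z w"
      then obtain x c where x: "length x = n" "z = x @ lst c" using split_len adj_def by metis
      obtain y d where y: "length y = n" "w = y @ lst d" using zw split_len adj_def by metis
      have cs: "(x = y \<and> (d = nx c \<or> c = nx d)) \<or> (c = d \<and> adj n x y)"
        using zw adj_app2[OF x(1) y(1)] x y by simp
      then show "\<exists>P\<in>{ext n p c |p c. p \<in> PS}. \<exists>i<Suc (Suc n). {z, w} = {P i, P (Suc i)}"
      proof (elim disjE conjE)
        assume xy: "x = y" and cd: "d = nx c"
        obtain p where p: "p \<in> PS" "x = p 0 \<or> x = p n" using E x(1) by blast
        from p(2) show ?thesis
        proof
          assume "x = p 0" then show ?thesis using p(1) x y xy cd
            by (intro bexI[OF _ mem[OF p(1), of c]] exI[of _ 0]) (simp add: insert_commute)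
        next
          assume "x = p n" then show ?thesis using p(1) x y xy cd
            by (intro bexI[OF _ mem[OF p(1), of c]] exI[of _ "Suc n"]) (simp add: insert_commute)
        qed
      next
        assume xy: "x = y" and cd: "c = nx d"
        obtain p where p: "p \<in> PS" "x = p 0 \<or> x = p n" using E x(1) by blast
        from p(2) show ?thesis
        proof
          assume "x = p 0" then show ?thesis using p(1) x y xy cd
            by (intro bexI[OF _ mem[OF p(1), of d]] exI[of _ 0]) (simp add: insert_commute)
        next
          assume "x = p n" then show ?thesis using p(1) x y xy cd
            by (intro bexI[OF _ mem[OF p(1), of d]] exI[of _ "Suc n"]) (simp add: insert_commute)
        qed
      next
        assume cd: "c = d" and a: "adj n x y"
        obtain p i where p: "p \<in> PS" "i < n" "{x,y} = {p i, p (Suc i)}" using C[OF a] by blast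
        have e1: "ext n p c (Suc i) = p i @ lst c" "ext n p c (Suc (Suc i)) = p (Suc i) @ lst c"
          using p(2) by simp_all
        have "(x = p i \<and> y = p (Suc i)) \<or> (x = p (Suc i) \<and> y = p i)" using p(3) by (simp add: dbl)
        then have "{z, w} = {ext n p c (Suc i), ext n p c (Suc (Suc i))}"
          unfolding e1 using x(2) y(2) cd by (auto simp: insert_commute)
        then show ?thesis using p(2) by (intro bexI[OF _ mem[OF p(1), of c]] exI[of _ "Suc i"]) simp
      qed
    qed
    show "\<forall>P\<in>{ext n p c |p c. p \<in> PS}. \<forall>P'\<in>{ext n p c |p c. p \<in> PS}. \<forall>i<Suc (Suc n). \<forall>i'<Suc (Suc n).
            {P i, P (Suc i)} = {P' i', P' (Suc i')} \<longrightarrow> P = P'"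
    proof (intro ballI allI impI)
      fix P P' i i'
      assume "P \<in> {ext n p c |p c. p \<in> PS}" "P' \<in> {ext n p c |p c. p \<in> PS}"
        and i: "i < Suc (Suc n)" and i': "i' < Suc (Suc n)"
        and eq: "{P i, P (Suc i)} = {P' i', P' (Suc i')}"
      then obtain p c p' c' where P: "P = ext n p c" and p: "p \<in> PS" and P': "P' = ext n p' c'" and p': "p' \<in> PS"
        by blast
      from step_val[OF i, of p c, folded P] step_val[OF i', of p' c', folded P']
      have "p = p' \<and> c = c'"
      proof (elim disjE exE conjE)
        assume "i = 0" "P i = p 0 @ lst (nx c)" "P (Suc i) = p 0 @ lst c"
          "i' = 0" "P' i' = p' 0 @ lst (nx c')" "P' (Suc i') = p' 0 @ lst c'"
        then have "(p 0 = p' 0 \<and> nx c = nx c' \<and> c = c') \<or> (p 0 = p' 0 \<and> nx c = c' \<and> c = nx c')"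
          using dbl_app[OF L0[OF p] L0[OF p] L0[OF p'] L0[OF p']] eq by auto
        then have "p 0 = p' 0" "c = c'" by auto
        then show ?thesis using EU[OF p p', of "p 0"] by simp
      next
        fix j' assume "i = 0" "P i = p 0 @ lst (nx c)" "P (Suc i) = p 0 @ lst c"
          "j' < n" "i' = Suc j'" "P' i' = p' j' @ lst c'" "P' (Suc i') = p' (Suc j') @ lst c'"
        then have "(nx c = c' \<and> c = c') \<or> (nx c = c' \<and> c = c')"
          using dbl_app[OF L0[OF p] L0[OF p] Lj[OF p' \<open>j' < n\<close>] LS[OF p' \<open>j' < n\<close>]] eq by auto
        then show ?thesis by auto
      next
        assume "i = 0" "P i = p 0 @ lst (nx c)" "P (Suc i) = p 0 @ lst c"
          "i' = Suc n" "P' i' = p' n @ lst c'" "P' (Suc i') = p' n @ lst (nx c')"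
        then have "(p 0 = p' n \<and> nx c = c' \<and> c = nx c') \<or> (p 0 = p' n \<and> nx c = nx c' \<and> c = c')"
          using dbl_app[OF L0[OF p] L0[OF p] Ln[OF p'] Ln[OF p']] eq by auto
        then have "p 0 = p' n" "c = c'" by auto
        then show ?thesis using EU[OF p p', of "p 0"] by simp
      next
        fix j assume "j < n" "i = Suc j" "P i = p j @ lst c" "P (Suc i) = p (Suc j) @ lst c"
          "i' = 0" "P' i' = p' 0 @ lst (nx c')" "P' (Suc i') = p' 0 @ lst c'"
        then have "(c = nx c' \<and> c = c') \<or> (c = c' \<and> c = nx c')"
          using dbl_app[OF Lj[OF p \<open>j < n\<close>] LS[OF p \<open>j < n\<close>] L0[OF p'] L0[OF p']] eq by auto
        then show ?thesis by auto
      next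
        fix j j' assume "j < n" "i = Suc j" "P i = p j @ lst c" "P (Suc i) = p (Suc j) @ lst c"
          "j' < n" "i' = Suc j'" "P' i' = p' j' @ lst c'" "P' (Suc i') = p' (Suc j') @ lst c'"
        then have "(p j = p' j' \<and> p (Suc j) = p' (Suc j') \<and> c = c') \<or> (p j = p' (Suc j') \<and> p (Suc j) = p' j' \<and> c = c')"
          using dbl_app[OF Lj[OF p \<open>j < n\<close>] LS[OF p \<open>j < n\<close>] Lj[OF p' \<open>j' < n\<close>] LS[OF p' \<open>j' < n\<close>]] eq by auto
        then have "{p j, p (Suc j)} = {p' j', p' (Suc j')}" "c = c'" by (auto simp: dbl)
        then show ?thesis using U[OF p p' \<open>j < n\<close> \<open>j' < n\<close>] by simp
      next
        fix j assume "j < n" "i = Suc j" "P i = p j @ lst c" "P (Suc i) = p (Suc j) @ lst c"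
          "i' = Suc n" "P' i' = p' n @ lst c'" "P' (Suc i') = p' n @ lst (nx c')"
        then have "(c = c' \<and> c = nx c') \<or> (c = nx c' \<and> c = c')"
          using dbl_app[OF Lj[OF p \<open>j < n\<close>] LS[OF p \<open>j < n\<close>] Ln[OF p'] Ln[OF p']] eq by auto
        then show ?thesis by auto
      next
        assume "i = Suc n" "P i = p n @ lst c" "P (Suc i) = p n @ lst (nx c)"
          "i' = 0" "P' i' = p' 0 @ lst (nx c')" "P' (Suc i') = p' 0 @ lst c'"
        then have "(p n = p' 0 \<and> c = nx c' \<and> nx c = c') \<or> (p n = p' 0 \<and> c = c' \<and> nx c = nx c')"
          using dbl_app[OF Ln[OF p] Ln[OF p] L0[OF p'] L0[OF p']] eq by auto
        then have "p n = p' 0" "c = c'" by auto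
        then show ?thesis using EU[OF p p', of "p n"] by simp
      next
        fix j' assume "i = Suc n" "P i = p n @ lst c" "P (Suc i) = p n @ lst (nx c)"
          "j' < n" "i' = Suc j'" "P' i' = p' j' @ lst c'" "P' (Suc i') = p' (Suc j') @ lst c'"
        then have "(c = c' \<and> nx c = c') \<or> (c = c' \<and> nx c = c')"
          using dbl_app[OF Ln[OF p] Ln[OF p] Lj[OF p' \<open>j' < n\<close>] LS[OF p' \<open>j' < n\<close>]] eq by auto
        then show ?thesis by auto
      next
        assume "i = Suc n" "P i = p n @ lst c" "P (Suc i) = p n @ lst (nx c)"
          "i' = Suc n" "P' i' = p' n @ lst c'" "P' (Suc i') = p' n @ lst (nx c')"
        then have "(p n = p' n \<and> c = c' \<and> nx c = nx c') \<or> (p n = p' n \<and> c = nx c' \<and> nx c = c')"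
          using dbl_app[OF Ln[OF p] Ln[OF p] Ln[OF p'] Ln[OF p']] eq by auto
        then have "p n = p' n" "c = c'" by auto
        then show ?thesis using EU[OF p p', of "p n"] by simp
      qed
      then show "P = P'" using P P' by simp
    qed
    show "\<forall>z. length z = Suc (Suc n) \<longrightarrow> (\<exists>P\<in>{ext n p c |p c. p \<in> PS}. z = P 0 \<or> z = P (Suc (Suc n)))"
    proof (intro allI impI)
      fix z :: "bool list" assume "length z = Suc (Suc n)"
      then obtain x d where x: "length x = n" "z = x @ lst d" using split_len by blast
      obtain c where c: "d = nx c" using nx_surj by blast
      obtain p where p: "p \<in> PS" "x = p 0 \<or> x = p n" using E x(1) by blast
      show "\<exists>P\<in>{ext n p c |p c. p \<in> PS}. z = P 0 \<or> z = P (Suc (Suc n))"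
        using p x c by (intro bexI[OF _ mem[OF p(1), of c]]) auto
    qed
    show "\<forall>P\<in>{ext n p c |p c. p \<in> PS}. \<forall>P'\<in>{ext n p c |p c. p \<in> PS}. \<forall>z.
           (z = P 0 \<or> z = P (Suc (Suc n))) \<longrightarrow> (z = P' 0 \<or> z = P' (Suc (Suc n))) \<longrightarrow> P = P'"
    proof (intro ballI allI impI)
      fix P P' z
      assume "P \<in> {ext n p c |p c. p \<in> PS}" "P' \<in> {ext n p c |p c. p \<in> PS}"
        and z: "z = P 0 \<or> z = P (Suc (Suc n))" and z': "z = P' 0 \<or> z = P' (Suc (Suc n))"
      then obtain p c p' c' where P: "P = ext n p c" and p: "p \<in> PS" and P': "P' = ext n p' c'" and p': "p' \<in> PS"
        by blast
      obtain x where x: "x = p 0 \<or> x = p n" "z = x @ lst (nx c)" using z P by auto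
      obtain x' where x': "x' = p' 0 \<or> x' = p' n" "z = x' @ lst (nx c')" using z' P' by auto
      have lx: "length x = n" "length x' = n" using x(1) x'(1) L0[OF p] Ln[OF p] L0[OF p'] Ln[OF p'] by auto
      have "x = x' \<and> c = c'" using x(2) x'(2) lx by (simp add: app_eq)
      then show "P = P'" using EU[OF p p', of x] x x' P P' by auto
    qed
  qed
qed

lemma PSys_odd: "\<exists>PS. PSys (Suc (2 * k)) PS"
proof (induction k)
  case 0 then show ?case using PSys_base by auto
next
  case (Suc k)
  then obtain PS where "PSys (Suc (2 * k)) PS" by blast
  then have "PSys (Suc (Suc (Suc (2 * k)))) {ext (Suc (2 * k)) p c | p c. p \<in> PS}"
    by (rule PSys_step) simp
  moreover have "Suc (2 * Suc k) = Suc (Suc (Suc (2 * k)))" by simp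
  ultimately show ?case by metis
qed

lemma edges_mhash: "edges (mhash m G) =
      {{(u, 0), (v, 0)} | u v. {u, v} \<in> edges G} \<union>
      {{(u, m), (v, m)} | u v. {u, v} \<in> edges G} \<union>
      {{(v, i), (v, Suc i)} | v i. v \<in> verts G \<and> i < m}"
  by (simp add: mhash_def edges_def)

lemma verts_mhash: "verts (mhash m G) = verts G \<times> {0..m}"
  by (simp add: mhash_def verts_def)

lemma divides_PSys:
  assumes P: "PSys m PS"
  shows "divides (mhash m (hypercube q)) (hypercube (m + q))"
proof -
  have L: "\<And>p i. p \<in> PS \<Longrightarrow> i \<le> m \<Longrightarrow> length (p i) = m"
    using PSys_L[OF P] by blast
  have I: "\<And>p. p \<in> PS \<Longrightarrow> inj_on p {0..m}"
    using PSys_I[OF P] by blast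
  have A: "\<And>p i. p \<in> PS \<Longrightarrow> i < m \<Longrightarrow> adj m (p i) (p (Suc i))"
    using PSys_A[OF P] by blast
  have C: "\<And>x y. adj m x y \<Longrightarrow> \<exists>p\<in>PS. \<exists>i<m. {x,y} = {p i, p (Suc i)}"
    using PSys_C[OF P] by blast
  have U: "\<And>p p' i i'. p \<in> PS \<Longrightarrow> p' \<in> PS \<Longrightarrow> i < m \<Longrightarrow> i' < m \<Longrightarrow>
       {p i, p (Suc i)} = {p' i', p' (Suc i')} \<Longrightarrow> p = p'"
    using PSys_U[OF P] by blast
  have E: "\<And>x. length x = m \<Longrightarrow> \<exists>p\<in>PS. x = p 0 \<or> x = p m"
    using PSys_E[OF P] by blast
  have EU: "\<And>p p' x. p \<in> PS \<Longrightarrow> p' \<in> PS \<Longrightarrow> (x = p 0 \<or> x = p m) \<Longrightarrow> (x = p' 0 \<or> x = p' m) \<Longrightarrow> p = p'"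
    using PSys_EU[OF P] by blast
  define H where "H = mhash m (hypercube q)"
  define G where "G = hypercube (m + q)"
  define f where "f p = (\<lambda>(v::bool list, i::nat). p i @ v)" for p :: "nat \<Rightarrow> bool list"
  define K where "K p = (f p ` verts H, (`) (f p) ` edges H)" for p
  have VH: "verts H = {v. length v = q} \<times> {0..m}" by (simp add: H_def verts_mhash verts_hc)
  have EH: "e \<in> edges H \<longleftrightarrow> (\<exists>u v. e = {(u,0),(v,0)} \<and> adj q u v) \<or> (\<exists>u v. e = {(u,m),(v,m)} \<and> adj q u v)
        \<or> (\<exists>v i. e = {(v,i),(v,Suc i)} \<and> length v = q \<and> i < m)" for e
    by (simp add: H_def edges_mhash edge_pair verts_hc)
  have VK: "verts (K p) = f p ` verts H" and EK: "edges (K p) = (`) (f p) ` edges H" for p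
    by (simp_all add: K_def verts_def edges_def)
  have VG: "verts G = {xs. length xs = m + q}" by (simp add: G_def verts_hc)
  have EG: "{x, y} \<in> edges G \<longleftrightarrow> adj (m + q) x y" for x y by (simp add: G_def edge_pair)
  have adjq_len: "adj q u v \<Longrightarrow> length u = q \<and> length v = q" for u v by (simp add: adj_def)
  have injf: "inj_on (f p) (verts H)" if p: "p \<in> PS" for p
  proof (rule inj_onI)
    fix a b assume a: "a \<in> verts H" and b: "b \<in> verts H" and eq: "f p a = f p b"
    obtain v i where ai: "a = (v, i)" by (cases a)
    obtain w j where bj: "b = (w, j)" by (cases b)
    have r: "i \<le> m" "j \<le> m" using a b ai bj VH by auto
    have "p i = p j \<and> v = w" using eq ai bj L[OF p r(1)] L[OF p r(2)] by (simp add: f_def app_eq)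
    moreover then have "i = j" using I[OF p] r unfolding inj_on_def by auto
    ultimately show "a = b" using ai bj by simp
  qed
  have EKd: "e \<in> edges (K p) \<longleftrightarrow>
      (\<exists>u v. e = {p 0 @ u, p 0 @ v} \<and> adj q u v) \<or> (\<exists>u v. e = {p m @ u, p m @ v} \<and> adj q u v)
        \<or> (\<exists>v i. e = {p i @ v, p (Suc i) @ v} \<and> length v = q \<and> i < m)" for p e
  proof
    assume "e \<in> edges (K p)"
    then obtain e0 where "e0 \<in> edges H" "e = f p ` e0" using EK by auto
    then show "(\<exists>u v. e = {p 0 @ u, p 0 @ v} \<and> adj q u v) \<or> (\<exists>u v. e = {p m @ u, p m @ v} \<and> adj q u v)
        \<or> (\<exists>v i. e = {p i @ v, p (Suc i) @ v} \<and> length v = q \<and> i < m)"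
      unfolding EH by (auto simp: f_def)
  next
    assume "(\<exists>u v. e = {p 0 @ u, p 0 @ v} \<and> adj q u v) \<or> (\<exists>u v. e = {p m @ u, p m @ v} \<and> adj q u v)
        \<or> (\<exists>v i. e = {p i @ v, p (Suc i) @ v} \<and> length v = q \<and> i < m)"
    then show "e \<in> edges (K p)"
    proof (elim disjE exE conjE)
      fix u v assume "e = {p 0 @ u, p 0 @ v}" "adj q u v"
      then have "e = f p ` {(u,0),(v,0)}" "{(u,0),(v,0)} \<in> edges H" by (auto simp: f_def EH)
      then show ?thesis unfolding EK by blast
    next
      fix u v assume "e = {p m @ u, p m @ v}" "adj q u v"
      then have "e = f p ` {(u,m),(v,m)}" "{(u,m),(v,m)} \<in> edges H" by (auto simp: f_def EH)
      then show ?thesis unfolding EK by blast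
    next
      fix v i assume "e = {p i @ v, p (Suc i) @ v}" "length v = q" "i < m"
      then have "e = f p ` {(v,i),(v,Suc i)}" "{(v,i),(v,Suc i)} \<in> edges H" by (auto simp: f_def EH)
      then show ?thesis unfolding EK by blast
    qed
  qed
  have sub: "subgraph (K p) G" if p: "p \<in> PS" for p
    unfolding subgraph_def
  proof (intro conjI ballI)
    show "verts (K p) \<subseteq> verts G" using L[OF p] by (auto simp: VK VH VG f_def)
    show "edges (K p) \<subseteq> edges G"
    proof
      fix e assume "e \<in> edges (K p)"
      then show "e \<in> edges G" unfolding EKd
      proof (elim disjE exE conjE)
        fix u v assume "e = {p 0 @ u, p 0 @ v}" "adj q u v"
        then show ?thesis using EG adj_append[OF L[OF p, of 0] L[OF p, of 0], of u q v] adjq_len by auto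
      next
        fix u v assume "e = {p m @ u, p m @ v}" "adj q u v"
        then show ?thesis using EG adj_append[OF L[OF p, of m] L[OF p, of m], of u q v] adjq_len by auto
      next
        fix v i assume "e = {p i @ v, p (Suc i) @ v}" "length v = q" "i < m"
        then show ?thesis using EG adj_append[OF L[OF p, of i] L[OF p, of "Suc i"], of v q v] A[OF p] by auto
      qed
    qed
    fix e assume "e \<in> edges (K p)"
    then obtain e0 where "e0 \<in> edges H" "e = f p ` e0" using EK by auto
    moreover have "e0 \<subseteq> verts H" if "e0 \<in> edges H" for e0
      using that unfolding EH VH by (auto dest: adjq_len)
    ultimately show "e \<subseteq> verts (K p)" using VK by auto
  qed
  have iso: "graph_iso H (K p)" if p: "p \<in> PS" for p
    unfolding graph_iso_def using injf[OF p] VK EK by (intro exI[of _ "f p"]) (auto simp: inj_on_imp_bij_betw)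
  have cover: "edges G \<subseteq> (\<Union>p\<in>PS. edges (K p))"
  proof
    fix e assume "e \<in> edges G"
    then obtain z w where e: "e = {z, w}" "adj (m + q) z w" unfolding G_def edges_hc by blast
    have lz: "length z = m + q" "length w = m + q" using e(2) adj_def by auto
    define a where "a = take m z" define u where "u = drop m z"
    define a' where "a' = take m w" define v where "v = drop m w"
    have zs: "z = a @ u" "w = a' @ v" by (simp_all add: a_def u_def a'_def v_def)
    have ls: "length a = m" "length a' = m" "length u = q" "length v = q"
      using lz by (simp_all add: a_def u_def a'_def v_def)
    have "(a = a' \<and> adj q u v) \<or> (u = v \<and> adj m a a')" using e(2) zs adj_append[OF ls] by simp
    then show "e \<in> (\<Union>p\<in>PS. edges (K p))"
    proof (elim disjE conjE)
      assume aa: "a = a'" and uv: "adj q u v"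
      obtain p where p: "p \<in> PS" "a = p 0 \<or> a = p m" using E ls(1) by blast
      then show ?thesis using aa uv e zs EKd[of e p] by blast
    next
      assume uv: "u = v" and aa: "adj m a a'"
      obtain p i where p: "p \<in> PS" "i < m" "{a, a'} = {p i, p (Suc i)}" using C[OF aa] by blast
      have "e = {p i @ u, p (Suc i) @ u}" using p(3) e zs uv by (auto simp: dbl)
      then show ?thesis using p ls EKd[of e p] by blast
    qed
  qed
  have disj: "p = p'" if p: "p \<in> PS" and p': "p' \<in> PS" and e: "e \<in> edges (K p)" "e \<in> edges (K p')" for p p' e
  proof -
    have Lp: "\<And>i. i \<le> m \<Longrightarrow> length (p i) = m" "\<And>i. i \<le> m \<Longrightarrow> length (p' i) = m" using L p p' by auto
    have endcase: "p = p'" if "x = p 0 \<or> x = p m" "y = p' 0 \<or> y = p' m" "{x @ u, x @ v} = {y @ u', y @ v'}"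
      "adj q u v" for x y u v u' v'
    proof -
      have "length x = m" "length y = m" using that(1,2) Lp by auto
      then have "x = y" using that(3) dbl_app[of x m x y y u v u' v'] by auto
      then show ?thesis using EU[OF p p'] that(1,2) by blast
    qed
    have mixed: "False" if "x = r 0 \<or> x = r m" "r \<in> PS" "s \<in> PS" "{x @ u, x @ v} = {s i @ w, s (Suc i) @ w}"
      "adj q u v" "i < m" for x r s u v w i
    proof -
      have "length x = m" "length (s i) = m" "length (s (Suc i)) = m" using that(1,2,3,6) L by auto
      then have "u = w \<and> v = w" using that(4) dbl_app[of x m x "s i" "s (Suc i)" u v w w] by auto
      then show False using adj_neq[OF that(5)] by simp
    qed
    have forms: "(\<exists>x u v. (x = r 0 \<or> x = r m) \<and> e = {x @ u, x @ v} \<and> adj q u v) \<or>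
        (\<exists>w i. e = {r i @ w, r (Suc i) @ w} \<and> i < m)" if "e \<in> edges (K r)" for r
      using that unfolding EKd by blast
    show ?thesis
    proof (cases "\<exists>x u v. (x = p 0 \<or> x = p m) \<and> e = {x @ u, x @ v} \<and> adj q u v")
      case True
      then obtain x u v where x: "x = p 0 \<or> x = p m" "e = {x @ u, x @ v}" "adj q u v" by blast
      show ?thesis
      proof (cases "\<exists>x u v. (x = p' 0 \<or> x = p' m) \<and> e = {x @ u, x @ v} \<and> adj q u v")
        case True
        then obtain x' u' v' where x': "x' = p' 0 \<or> x' = p' m" "e = {x' @ u', x' @ v'}" "adj q u' v'" by blast
        have "{x @ u, x @ v} = {x' @ u', x' @ v'}" using x(2) x'(2) by simp
        then show ?thesis by (rule endcase[OF x(1) x'(1) _ x(3)])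
      next
        case False
        then obtain w i where w: "e = {p' i @ w, p' (Suc i) @ w}" "i < m" using forms[OF e(2)] by blast
        have "{x @ u, x @ v} = {p' i @ w, p' (Suc i) @ w}" using x(2) w(1) by simp
        then show ?thesis using mixed[OF x(1) p p' _ x(3) w(2)] by blast
      qed
    next
      case False
      then obtain w i where w: "e = {p i @ w, p (Suc i) @ w}" "i < m" using forms[OF e(1)] by blast
      show ?thesis
      proof (cases "\<exists>x u v. (x = p' 0 \<or> x = p' m) \<and> e = {x @ u, x @ v} \<and> adj q u v")
        case True
        then obtain x' u' v' where x': "x' = p' 0 \<or> x' = p' m" "e = {x' @ u', x' @ v'}" "adj q u' v'" by blast
        have "{x' @ u', x' @ v'} = {p i @ w, p (Suc i) @ w}" using x'(2) w(1) by simp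
        then show ?thesis using mixed[OF x'(1) p' p _ x'(3) w(2)] by blast
      next
        case False
        then obtain w' i' where w': "e = {p' i' @ w', p' (Suc i') @ w'}" "i' < m" using forms[OF e(2)] by blast
        have "{p i @ w, p (Suc i) @ w} = {p' i' @ w', p' (Suc i') @ w'}" using w w' by simp
        then have "(p i = p' i' \<and> p (Suc i) = p' (Suc i')) \<or> (p i = p' (Suc i') \<and> p (Suc i) = p' i')"
          using dbl_app[OF Lp(1)[of i] Lp(1)[of "Suc i"] Lp(2)[of i'] Lp(2)[of "Suc i'"]] w(2) w'(2) by auto
        then have "{p i, p (Suc i)} = {p' i', p' (Suc i')}" by (auto simp: dbl)
        then show ?thesis using U[OF p p' w(2) w'(2)] by simp
      qed
    qed
  qed
  show ?thesis
    unfolding divides_def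
  proof (intro exI[of _ "K ` PS"] conjI)
    show "\<forall>Ka\<in>K ` PS. subgraph Ka (hypercube (m + q)) \<and> graph_iso (mhash m (hypercube q)) Ka"
    proof
      fix Ka assume "Ka \<in> K ` PS"
      then obtain p where "p \<in> PS" "Ka = K p" by blast
      then show "subgraph Ka (hypercube (m + q)) \<and> graph_iso (mhash m (hypercube q)) Ka"
        using sub[of p] iso[of p] unfolding G_def H_def by simp
    qed
    have sube: "edges (K p) \<subseteq> edges G" if "p \<in> PS" for p
      using sub[OF that] unfolding subgraph_def by (elim conjE)
    show "(\<Union>Ka\<in>K ` PS. edges Ka) = edges (hypercube (m + q))"
    proof
      show "(\<Union>Ka\<in>K ` PS. edges Ka) \<subseteq> edges (hypercube (m + q))"
      proof (rule UN_least)
        fix Ka assume "Ka \<in> K ` PS"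
        then obtain p where "p \<in> PS" "Ka = K p" by blast
        then show "edges Ka \<subseteq> edges (hypercube (m + q))" using sube unfolding G_def by simp
      qed
      show "edges (hypercube (m + q)) \<subseteq> (\<Union>Ka\<in>K ` PS. edges Ka)"
        using cover unfolding G_def by simp
    qed
    show "\<forall>K1\<in>K ` PS. \<forall>K2\<in>K ` PS. K1 \<noteq> K2 \<longrightarrow> edges K1 \<inter> edges K2 = {}"
    proof (intro ballI impI)
      fix K1 K2 assume "K1 \<in> K ` PS" "K2 \<in> K ` PS" and ne: "K1 \<noteq> K2"
      then obtain p1 p2 where p: "p1 \<in> PS" "p2 \<in> PS" "K1 = K p1" "K2 = K p2" by blast
      show "edges K1 \<inter> edges K2 = {}"
      proof (rule ccontr)
        assume "edges K1 \<inter> edges K2 \<noteq> {}"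
        then obtain e where "e \<in> edges (K p1)" "e \<in> edges (K p2)" using p by blast
        then have "p1 = p2" using disj[OF p(1) p(2)] by blast
        then show False using ne p by simp
      qed
    qed
  qed
qed

theorem lemma6:
  fixes m q :: nat
  assumes "odd m" and "m \<ge> 1" and "q \<ge> 1"
  shows "divides (mhash m (hypercube q)) (hypercube (m + q))"
proof -
  obtain k where k: "m = Suc (2 * k)" using assms(1) oddE by fastforce
  obtain PS where "PSys (Suc (2 * k)) PS" using PSys_odd by blast
  then have "PSys m PS" using k by simp
  from divides_PSys[OF this] show ?thesis .
qed

end
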